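(* Break the segment $[0,1]$ at three independent uniformly random points into four pieces. Conditioned on the event that the four pieces can form a quadrilateral, the expected value of the maximum area of a quadrilateral having these four side lengths is $\frac{17\pi}{525}-\frac{\pi^2}{160}$.
   Context: Four lengths summing to $1$ can form a quadrilateral iff each is less than $1/2$. The maximum is taken over all quadrilaterals with the given four side lengths (it is attained by the cyclic quadrilateral). *)

theory Defs
  imports "HOL-Analysis.Analysis"
begin

text \<open>Signed area (shoelace formula) of the closed polygon z1 z2 z3 z4, vertices in the plane
  (complex numbers).\<close>
definition quad_area :: "complex \<Rightarrow> complex \<Rightarrow> complex \<Rightarrow> complex \<Rightarrow> real" where
  "quad_area z1 z2 z3 z4 =
     \<bar>Im (cnj z1 * z2 + cnj z2 * z3 + cnj z3 * z4 + cnj z4 * z1)\<bar> / 2"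

definition is_quadrilateral ::
  "complex \<Rightarrow> complex \<Rightarrow> complex \<Rightarrow> complex \<Rightarrow> real \<Rightarrow> real \<Rightarrow> real \<Rightarrow> real \<Rightarrow> bool" where
  "is_quadrilateral z1 z2 z3 z4 a b c d \<longleftrightarrow>
     cmod (z2 - z1) = a \<and> cmod (z3 - z2) = b \<and> cmod (z4 - z3) = c \<and> cmod (z1 - z4) = d \<and>
     closed_segment z1 z2 \<inter> closed_segment z3 z4 = {} \<and>
     closed_segment z2 z3 \<inter> closed_segment z4 z1 = {}"

definition max_quad_area :: "real \<Rightarrow> real \<Rightarrow> real \<Rightarrow> real \<Rightarrow> real" where
  "max_quad_area a b c d =
     Sup {quad_area z1 z2 z3 z4 | z1 z2 z3 z4. is_quadrilateral z1 z2 z3 z4 a b c d}"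

definition pieces :: "real \<times> real \<times> real \<Rightarrow> real list" where
  "pieces p = (case p of (x, y, z) \<Rightarrow>
     let u = min x (min y z); w = max x (max y z); v = x + y + z - u - w
     in [u, v - u, w - v, 1 - w])"

definition max_area_of_pieces :: "real \<times> real \<times> real \<Rightarrow> real" where
  "max_area_of_pieces p = (case pieces p of [a, b, c, d] \<Rightarrow> max_quad_area a b c d | _ \<Rightarrow> 0)"

definition quad_event :: "(real \<times> real \<times> real) set" where
  "quad_event = {p. \<forall>l \<in> set (pieces p). l < 1/2}"

definition three_unif :: "(real \<times> real \<times> real) measure" where
  "three_unif = uniform_measure lborel ({0..1} \<times> {0..1} \<times> {0..1})"

end

theory Submission
  imports Defs
begin


lemma shoelace_diag:
  "Im (cnj z1 * z2 + cnj z2 * z3 + cnj z3 * z4 + cnj z4 * z1) = Im (cnj (z3 - z1) * (z4 - z2))"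
  by (simp add: algebra_simps)

lemma re_diag:
  "2 * Re (cnj (z3 - z1) * (z4 - z2)) =
     cmod (z3 - z2)^2 + cmod (z1 - z4)^2 - cmod (z2 - z1)^2 - cmod (z4 - z3)^2"
  unfolding cmod_power2 by (simp add: algebra_simps power2_eq_square)

lemma ptolemy:
  "cmod (z3 - z1) * cmod (z4 - z2) \<le> cmod (z2 - z1) * cmod (z4 - z3) + cmod (z1 - z4) * cmod (z3 - z2)"
proof -
  have "(z3 - z1) * (z4 - z2) = (z2 - z1) * (z4 - z3) + (z1 - z4) * (z2 - z3)"
    by (simp add: algebra_simps)
  hence "cmod ((z3 - z1) * (z4 - z2)) \<le> cmod ((z2 - z1) * (z4 - z3)) + cmod ((z1 - z4) * (z2 - z3))"
    by (metis norm_triangle_ineq)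
  thus ?thesis by (simp add: norm_mult norm_minus_commute)
qed

lemma area_bound:
  assumes "cmod (z2 - z1) = a" "cmod (z3 - z2) = b" "cmod (z4 - z3) = c" "cmod (z1 - z4) = d"
  shows "quad_area z1 z2 z3 z4 \<le> sqrt (((b+c+d-a)/2) * ((a+c+d-b)/2) * ((a+b+d-c)/2) * ((a+b+c-d)/2))"
proof -
  define w where "w = cnj (z3 - z1) * (z4 - z2)"
  have a0: "a \<ge> 0" "b \<ge> 0" "c \<ge> 0" "d \<ge> 0" using assms by auto
  have cw: "cmod w = cmod (z3 - z1) * cmod (z4 - z2)" unfolding w_def norm_mult complex_mod_cnj ..
  have pt: "cmod w \<le> a * c + d * b" using ptolemy[of z3 z1 z4 z2] assms cw by simp
  have re: "2 * Re w = b^2 + d^2 - a^2 - c^2" using re_diag[of z3 z1 z4 z2] assms by (simp add: w_def)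
  have sq: "(cmod w)^2 = (Re w)^2 + (Im w)^2" by (simp add: cmod_power2)
  have cw0: "0 \<le> cmod w" by simp
  have "(cmod w)^2 \<le> (a*c+d*b)^2" using pt cw0 by (simp add: power_mono)
  hence ineq: "(Im w)^2 \<le> (a*c+d*b)^2 - (Re w)^2" using sq by linarith
  have qa: "quad_area z1 z2 z3 z4 = \<bar>Im w\<bar> / 2"
    unfolding quad_area_def w_def shoelace_diag ..
  have "(\<bar>Im w\<bar> / 2)^2 \<le> ((b+c+d-a)/2) * ((a+c+d-b)/2) * ((a+b+d-c)/2) * ((a+b+c-d)/2)"
  proof -
    have "(\<bar>Im w\<bar> / 2)^2 = (Im w)^2 / 4" by (simp add: power_divide)
    also have "\<dots> \<le> ((a*c+d*b)^2 - (Re w)^2) / 4" using ineq by simp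
    also have "Re w = (b^2 + d^2 - a^2 - c^2) / 2" using re by simp
    also have "((a*c+d*b)^2 - ((b^2 + d^2 - a^2 - c^2) / 2)^2) / 4 =
       ((b+c+d-a)/2) * ((a+c+d-b)/2) * ((a+b+d-c)/2) * ((a+b+c-d)/2)"
      by (simp add: field_simps power2_eq_square)
    finally show ?thesis .
  qed
  thus ?thesis unfolding qa by (rule real_le_rsqrt)
qed


lemma seg_dist:
  fixes x y z :: complex
  assumes "cmod (x - y) \<ge> cmod (x - z) + cmod (z - y)"
  shows "z \<in> closed_segment x y"
proof -
  have "dist x y \<le> dist x z + dist z y" by (rule dist_triangle)
  hence "dist x y = dist x z + dist z y" using assms by (simp add: dist_norm)
  thus ?thesis using between between_mem_segment by blast
qed

lemma quad_necessary:
  assumes "is_quadrilateral z1 z2 z3 z4 a b c d"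
  shows "0 < a \<and> 0 < b \<and> 0 < c \<and> 0 < d \<and> a < b + c + d \<and> b < a + c + d \<and> c < a + b + d \<and> d < a + b + c"
proof -
  note q = assms[unfolded is_quadrilateral_def]
  have A: "cmod (z2 - z1) = a" "cmod (z3 - z2) = b" "cmod (z4 - z3) = c" "cmod (z1 - z4) = d"
    using q by auto
  have D1: "closed_segment z1 z2 \<inter> closed_segment z3 z4 = {}"
   and D2: "closed_segment z2 z3 \<inter> closed_segment z4 z1 = {}" using q by auto
  have "a \<noteq> 0"
  proof
    assume "a = 0" hence "z1 = z2" using A by auto
    thus False using D2 by auto
  qed
  moreover have "b \<noteq> 0"
  proof
    assume "b = 0" hence "z2 = z3" using A by auto
    thus False using D1 by auto
  qed
  moreover have "c \<noteq> 0"
  proof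
    assume "c = 0" hence "z3 = z4" using A by auto
    thus False using D2 by auto
  qed
  moreover have "d \<noteq> 0"
  proof
    assume "d = 0" hence "z4 = z1" using A by auto
    thus False using D1 by auto
  qed
  moreover have "a \<ge> 0" "b \<ge> 0" "c \<ge> 0" "d \<ge> 0" using A by auto
  moreover have "a < b + c + d"
  proof (rule ccontr)
    assume "\<not> ?thesis"
    have "cmod (z1 - z3) \<le> cmod (z1 - z4) + cmod (z4 - z3)" using dist_triangle[of z1 z3 z4] by (simp add: dist_norm)
    hence "cmod (z1 - z2) \<ge> cmod (z1 - z3) + cmod (z3 - z2)"
      using A \<open>\<not> a < b + c + d\<close> by (simp add: norm_minus_commute)
    hence "z3 \<in> closed_segment z1 z2" by (rule seg_dist)
    thus False using D1 by auto
  qed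
  moreover have "b < a + c + d"
  proof (rule ccontr)
    assume "\<not> ?thesis"
    have "cmod (z2 - z4) \<le> cmod (z2 - z1) + cmod (z1 - z4)" using dist_triangle[of z2 z4 z1] by (simp add: dist_norm)
    hence "cmod (z2 - z3) \<ge> cmod (z2 - z4) + cmod (z4 - z3)"
      using A \<open>\<not> b < a + c + d\<close> by (simp add: norm_minus_commute)
    hence "z4 \<in> closed_segment z2 z3" by (rule seg_dist)
    thus False using D2 by auto
  qed
  moreover have "c < a + b + d"
  proof (rule ccontr)
    assume "\<not> ?thesis"
    have "cmod (z3 - z1) \<le> cmod (z3 - z2) + cmod (z2 - z1)" using dist_triangle[of z3 z1 z2] by (simp add: dist_norm)
    hence "cmod (z3 - z4) \<ge> cmod (z3 - z1) + cmod (z1 - z4)"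
      using A \<open>\<not> c < a + b + d\<close> by (simp add: norm_minus_commute)
    hence "z1 \<in> closed_segment z3 z4" by (rule seg_dist)
    thus False using D1 by auto
  qed
  moreover have "d < a + b + c"
  proof (rule ccontr)
    assume "\<not> ?thesis"
    have "cmod (z4 - z2) \<le> cmod (z4 - z3) + cmod (z3 - z2)" using dist_triangle[of z4 z2 z3] by (simp add: dist_norm)
    hence "cmod (z4 - z1) \<ge> cmod (z4 - z2) + cmod (z2 - z1)"
      using A \<open>\<not> d < a + b + c\<close> by (simp add: norm_minus_commute)
    hence "z2 \<in> closed_segment z4 z1" by (rule seg_dist)
    thus False using D2 by auto
  qed
  ultimately show ?thesis by auto
qed


lemma quad_construct:
  fixes a b c d :: real
  assumes pos: "0 < a" "0 < b" "0 < c" "0 < d"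
    and tri: "a < b + c + d" "b < a + c + d" "c < a + b + d" "d < a + b + c"
  shows "\<exists>z1 z2 z3 z4. is_quadrilateral z1 z2 z3 z4 a b c d \<and>
    quad_area z1 z2 z3 z4 = sqrt (((b+c+d-a)/2) * ((a+c+d-b)/2) * ((a+b+d-c)/2) * ((a+b+c-d)/2))"
proof -
  define K where "K = a*b + c*d"
  have K0: "K > 0" using pos by (simp add: K_def add_pos_pos)
  define C0 where "C0 = (a^2+b^2-c^2-d^2) / (2*K)"
  have h1: "2*K - (a^2+b^2-c^2-d^2) = (c+d+a-b)*(c+d-a+b)"
    by (simp add: K_def algebra_simps power2_eq_square)
  have h2: "2*K + (a^2+b^2-c^2-d^2) = (a+b+c-d)*(a+b-c+d)"
    by (simp add: K_def algebra_simps power2_eq_square)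
  have p1: "(c+d+a-b)*(c+d-a+b) > 0" using tri by (intro mult_pos_pos) auto
  have p2: "(a+b+c-d)*(a+b-c+d) > 0" using tri by (intro mult_pos_pos) auto
  have C0eq: "2*K*C0 = a^2+b^2-c^2-d^2" using K0 by (simp add: C0_def)
  have Clt: "C0 < 1"
  proof -
    have "2*K*C0 < 2*K*1" using C0eq h1 p1 by simp
    thus ?thesis using K0 by simp
  qed
  have Cgt: "-1 < C0"
  proof -
    have "2*K*(-1) < 2*K*C0" using C0eq h2 p2 by simp
    thus ?thesis using K0 by (simp only: mult_less_cancel_left_pos)
  qed
  define S0 where "S0 = sqrt (1 - C0^2)"
  have C2: "C0^2 < 1" using Clt Cgt by (simp add: abs_less_iff power2_less_1_iff)  
  have S0pos: "S0 > 0" using C2 by (simp add: S0_def)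
  have S0sq: "S0^2 = 1 - C0^2" using C2 by (simp add: S0_def)
  define P2 where "P2 = a^2 + b^2 - 2*a*b*C0"
  have P2': "P2 = c^2 + d^2 + 2*c*d*C0" using C0eq by (simp add: P2_def K_def algebra_simps)
  have P2pos: "P2 > 0"
  proof -
    have "2*a*b*C0 < 2*a*b*1" using Clt pos by simp
    moreover have "(a-b)^2 \<ge> 0" by simp
    ultimately show ?thesis unfolding P2_def by (simp add: power2_eq_square algebra_simps)
  qed
  define p where "p = sqrt P2"
  have ppos: "p > 0" using P2pos by (simp add: p_def)
  have psq: "p^2 = P2" using P2pos by (simp add: p_def)
  define x2 where "x2 = (a^2 + P2 - b^2) / (2*p)"
  define y2 where "y2 = a*b*S0/p"
  define x4 where "x4 = (d^2 + P2 - c^2) / (2*p)"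
  define y4 where "y4 = c*d*S0/p"
  have y2pos: "y2 > 0" using pos S0pos ppos by (simp add: y2_def)
  have y4pos: "y4 > 0" using pos S0pos ppos by (simp add: y4_def)
  have e2: "x2^2 + y2^2 = a^2"
  proof -
    have "x2^2 + y2^2 = ((a^2 + P2 - b^2)^2 + 4*a^2*b^2*S0^2) / (4*p^2)"
      using ppos by (simp add: x2_def y2_def field_simps power2_eq_square)
    also have "(a^2 + P2 - b^2)^2 + 4*a^2*b^2*S0^2 = 4*a^2*P2"
      unfolding S0sq by (simp add: P2_def power2_eq_square algebra_simps)
    finally show ?thesis using psq P2pos by simp
  qed
  have e4: "x4^2 + y4^2 = d^2"
  proof -
    have "x4^2 + y4^2 = ((d^2 + P2 - c^2)^2 + 4*c^2*d^2*S0^2) / (4*p^2)"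
      using ppos by (simp add: x4_def y4_def field_simps power2_eq_square)
    also have "(d^2 + P2 - c^2)^2 + 4*c^2*d^2*S0^2 = 4*d^2*P2"
      unfolding S0sq by (simp add: P2' power2_eq_square algebra_simps)
    finally show ?thesis using psq P2pos by simp
  qed
  have px2: "2*p*x2 = a^2 + P2 - b^2" using ppos by (simp add: x2_def)
  have px4: "2*p*x4 = d^2 + P2 - c^2" using ppos by (simp add: x4_def)
  have e3: "(p - x2)^2 + y2^2 = b^2"
  proof -
    have "(p - x2)^2 + y2^2 = p^2 - 2*p*x2 + (x2^2 + y2^2)" by (simp add: power2_eq_square algebra_simps)
    thus ?thesis using e2 px2 psq by simp
  qed
  have e5: "(x4 - p)^2 + y4^2 = c^2"
  proof -
    have "(x4 - p)^2 + y4^2 = p^2 - 2*p*x4 + (x4^2 + y4^2)" by (simp add: power2_eq_square algebra_simps)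
    thus ?thesis using e4 px4 psq by simp
  qed
  define z1 :: complex where "z1 = 0"
  define z2 where "z2 = Complex x2 (-y2)"
  define z3 where "z3 = Complex p 0"
  define z4 where "z4 = Complex x4 y4"
  have s1: "cmod (z2 - z1) = a" using e2 pos by (simp add: z1_def z2_def cmod_def)
  have s2: "cmod (z3 - z2) = b" using e3 pos by (simp add: z3_def z2_def cmod_def)
  have s3: "cmod (z4 - z3) = c" using e5 pos by (simp add: z3_def z4_def cmod_def)
  have s4: "cmod (z1 - z4) = d" using e4 pos by (simp add: z1_def z4_def cmod_def)
  have d1: "closed_segment z1 z2 \<inter> closed_segment z3 z4 = {}"
  proof (rule ccontr)
    assume "\<not> ?thesis"
    then obtain w where w1: "w \<in> closed_segment z1 z2" and w2: "w \<in> closed_segment z3 z4" by blast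
    from w1 obtain u where u: "0 \<le> u" "u \<le> 1" "w = (1 - u) *\<^sub>R z1 + u *\<^sub>R z2"
      unfolding in_segment by blast
    from w2 obtain v where v: "0 \<le> v" "v \<le> 1" "w = (1 - v) *\<^sub>R z3 + v *\<^sub>R z4"
      unfolding in_segment by blast
    have "Im w = - u * y2" using u by (simp add: z1_def z2_def)
    moreover have "Im w = v * y4" using v by (simp add: z3_def z4_def)
    ultimately have "u * y2 + v * y4 = 0" by simp
    hence "u = 0" "v = 0" using u v y2pos y4pos
      by (smt (verit) mult_nonneg_nonneg mult_pos_pos)+
    hence "z1 = z3" using u v by simp
    thus False using ppos by (simp add: z1_def z3_def complex_eq_iff)
  qed
  have d2: "closed_segment z2 z3 \<inter> closed_segment z4 z1 = {}"
  proof (rule ccontr)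
    assume "\<not> ?thesis"
    then obtain w where w1: "w \<in> closed_segment z2 z3" and w2: "w \<in> closed_segment z4 z1" by blast
    from w1 obtain u where u: "0 \<le> u" "u \<le> 1" "w = (1 - u) *\<^sub>R z2 + u *\<^sub>R z3"
      unfolding in_segment by blast
    from w2 obtain v where v: "0 \<le> v" "v \<le> 1" "w = (1 - v) *\<^sub>R z4 + v *\<^sub>R z1"
      unfolding in_segment by blast
    have "Im w = - (1 - u) * y2" using u(3) by (simp add: z3_def z2_def) (simp add: algebra_simps)
    moreover have "Im w = (1 - v) * y4" using v by (simp add: z1_def z4_def)
    ultimately have "(1 - u) * y2 + (1 - v) * y4 = 0" by (simp add: algebra_simps)
    hence "1 - u = 0" "1 - v = 0" using u v y2pos y4pos
      by (smt (verit) mult_nonneg_nonneg mult_pos_pos)+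
    hence "z3 = z1" using u v by simp
    thus False using ppos by (simp add: z1_def z3_def complex_eq_iff)
  qed
  have area: "quad_area z1 z2 z3 z4 = K * S0 / 2"
  proof -
    have "Im (cnj z1 * z2 + cnj z2 * z3 + cnj z3 * z4 + cnj z4 * z1) = p * y2 + p * y4"
      by (simp add: z1_def z2_def z3_def z4_def)
    also have "\<dots> = K * S0" using ppos by (simp add: y2_def y4_def K_def algebra_simps)
    finally show ?thesis using K0 S0pos by (simp add: quad_area_def)
  qed
  have "K * S0 / 2 = sqrt ((K * S0 / 2)^2)" using K0 S0pos by simp
  also have "(K * S0 / 2)^2 = ((b+c+d-a)/2) * ((a+c+d-b)/2) * ((a+b+d-c)/2) * ((a+b+c-d)/2)"
  proof -
    have "(K * S0 / 2)^2 = K^2 * S0^2 / 4" by (simp add: power_mult_distrib power_divide)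
    also have "\<dots> = (K^2 - (K*C0)^2) / 4" unfolding S0sq by (simp add: power_mult_distrib algebra_simps)
    also have "K*C0 = (a^2+b^2-c^2-d^2)/2" using C0eq by simp
    finally show ?thesis by (simp add: K_def field_simps power2_eq_square) 
  qed
  finally show ?thesis using s1 s2 s3 s4 d1 d2 area unfolding is_quadrilateral_def by metis
qed


lemma nn_integral_triple:
  fixes f :: "real \<times> real \<times> real \<Rightarrow> ennreal"
  assumes [measurable]: "f \<in> borel_measurable borel"
  shows "(\<integral>\<^sup>+p. f p \<partial>lborel) = (\<integral>\<^sup>+x. \<integral>\<^sup>+y. \<integral>\<^sup>+z. f (x,y,z) \<partial>lborel \<partial>lborel \<partial>lborel)"
proof -
  have "(\<integral>\<^sup>+p. f p \<partial>lborel) = (\<integral>\<^sup>+p. f p \<partial>(lborel \<Otimes>\<^sub>M lborel))"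
    by (simp only: lborel_prod)
  also have "\<dots> = (\<integral>\<^sup>+x. \<integral>\<^sup>+q. f (x,q) \<partial>lborel \<partial>lborel)"
    by (rule lborel.nn_integral_fst[symmetric]) (simp add: lborel_prod)
  also have "\<dots> = (\<integral>\<^sup>+x. \<integral>\<^sup>+y. \<integral>\<^sup>+z. f (x,y,z) \<partial>lborel \<partial>lborel \<partial>lborel)"
  proof (rule nn_integral_cong)
    fix x :: real
    have "(\<integral>\<^sup>+q. f (x,q) \<partial>lborel) = (\<integral>\<^sup>+q. f (x,q) \<partial>(lborel \<Otimes>\<^sub>M lborel))"
      by (simp only: lborel_prod)
    also have "\<dots> = (\<integral>\<^sup>+y. \<integral>\<^sup>+z. f (x,y,z) \<partial>lborel \<partial>lborel)"
      by (rule lborel.nn_integral_fst[symmetric]) (simp add: lborel_prod)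
    finally show "(\<integral>\<^sup>+q. f (x,q) \<partial>lborel) = (\<integral>\<^sup>+y. \<integral>\<^sup>+z. f (x,y,z) \<partial>lborel \<partial>lborel)" .
  qed
  finally show ?thesis .
qed

lemma swap12:
  fixes f :: "real \<times> real \<times> real \<Rightarrow> ennreal"
  assumes [measurable]: "f \<in> borel_measurable borel"
  shows "(\<integral>\<^sup>+x. \<integral>\<^sup>+y. \<integral>\<^sup>+z. f (x,y,z) \<partial>lborel \<partial>lborel \<partial>lborel) =
         (\<integral>\<^sup>+x. \<integral>\<^sup>+y. \<integral>\<^sup>+z. f (y,x,z) \<partial>lborel \<partial>lborel \<partial>lborel)"
proof -
  have m: "(\<lambda>(x,y). \<integral>\<^sup>+z. f (x,y,z) \<partial>lborel) \<in> borel_measurable (lborel \<Otimes>\<^sub>M lborel)"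
    by measurable
  show ?thesis using lborel_pair.Fubini'[OF m] by simp
qed

lemma swap23:
  fixes f :: "real \<times> real \<times> real \<Rightarrow> ennreal"
  assumes [measurable]: "f \<in> borel_measurable borel"
  shows "(\<integral>\<^sup>+x. \<integral>\<^sup>+y. \<integral>\<^sup>+z. f (x,y,z) \<partial>lborel \<partial>lborel \<partial>lborel) =
         (\<integral>\<^sup>+x. \<integral>\<^sup>+y. \<integral>\<^sup>+z. f (x,z,y) \<partial>lborel \<partial>lborel \<partial>lborel)"
proof (rule nn_integral_cong)
  fix x :: real
  have m: "(\<lambda>(y,z). f (x,y,z)) \<in> borel_measurable (lborel \<Otimes>\<^sub>M lborel)"
    by measurable
  show "(\<integral>\<^sup>+y. \<integral>\<^sup>+z. f (x,y,z) \<partial>lborel \<partial>lborel) = (\<integral>\<^sup>+y. \<integral>\<^sup>+z. f (x,z,y) \<partial>lborel \<partial>lborel)"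
    using lborel_pair.Fubini'[OF m] by simp
qed


definition mn :: "real \<times> real \<times> real \<Rightarrow> real" where
  "mn p = min (fst p) (min (fst (snd p)) (snd (snd p)))"
definition mx :: "real \<times> real \<times> real \<Rightarrow> real" where
  "mx p = max (fst p) (max (fst (snd p)) (snd (snd p)))"
definition md :: "real \<times> real \<times> real \<Rightarrow> real" where
  "md p = fst p + fst (snd p) + snd (snd p) - mn p - mx p"

lemma pieces_eq: "pieces p = [mn p, md p - mn p, mx p - md p, 1 - mx p]"
  by (cases p) (simp add: pieces_def mn_def mx_def md_def Let_def)

lemma mn_cont: "continuous_on UNIV mn"
  unfolding mn_def[abs_def] by (intro continuous_intros)
lemma mn_meas[measurable]: "mn \<in> borel_measurable borel"
  by (rule borel_measurable_continuous_onI[OF mn_cont])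
lemma mx_cont: "continuous_on UNIV mx"
  unfolding mx_def[abs_def] by (intro continuous_intros)
lemma mx_meas[measurable]: "mx \<in> borel_measurable borel"
  by (rule borel_measurable_continuous_onI[OF mx_cont])
lemma md_cont: "continuous_on UNIV md"
  unfolding md_def mn_def[abs_def] mx_def[abs_def] by (intro continuous_intros)
lemma md_meas[measurable]: "md \<in> borel_measurable borel"
  by (rule borel_measurable_continuous_onI[OF md_cont])

lemma proj_meas[measurable]:
  "(\<lambda>x::real\<times>real\<times>real. fst x) \<in> borel_measurable borel"
  "(\<lambda>x::real\<times>real\<times>real. fst (snd x)) \<in> borel_measurable borel"
  "(\<lambda>x::real\<times>real\<times>real. snd (snd x)) \<in> borel_measurable borel"
  by (rule borel_measurable_continuous_onI, intro continuous_intros)+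

definition good :: "real \<Rightarrow> real \<Rightarrow> real \<Rightarrow> real \<Rightarrow> bool" where
  "good a b c d \<longleftrightarrow> 0 < a \<and> a < 1/2 \<and> 0 < b \<and> b < 1/2 \<and> 0 < c \<and> c < 1/2 \<and> 0 < d \<and> d < 1/2"

definition Phi :: "(real \<Rightarrow> real \<Rightarrow> real) \<Rightarrow> real \<Rightarrow> real \<Rightarrow> real \<Rightarrow> real \<Rightarrow> real" where
  "Phi w a b c d = (if good a b c d then w (1/2 - a) (1/2 - b) * w (1/2 - c) (1/2 - d) else 0)"

definition Hw :: "(real \<Rightarrow> real \<Rightarrow> real) \<Rightarrow> real \<times> real \<times> real \<Rightarrow> real" where
  "Hw w p = Phi w (mn p) (md p - mn p) (mx p - md p) (1 - mx p)"

definition kf :: "(real \<Rightarrow> real \<Rightarrow> real) \<Rightarrow> real \<Rightarrow> real \<Rightarrow> real" where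
  "kf w s u = (if 0 < u \<and> u < 1/2 \<and> 0 < s - u \<and> s - u < 1/2 then w u (s - u) else 0)"

definition KK :: "(real \<Rightarrow> real \<Rightarrow> real) \<Rightarrow> real \<Rightarrow> ennreal" where
  "KK w s = (\<integral>\<^sup>+u. ennreal (kf w s u) \<partial>lborel)"

lemma mn_sym: "mn (y,x,z) = mn (x,y,z)" "mn (x,z,y) = mn (x,y,z)"
  by (auto simp: mn_def min_def)
lemma mx_sym: "mx (y,x,z) = mx (x,y,z)" "mx (x,z,y) = mx (x,y,z)"
  by (auto simp: mx_def max_def)
lemma md_sym: "md (y,x,z) = md (x,y,z)" "md (x,z,y) = md (x,y,z)"
  by (auto simp: md_def mn_sym mx_sym)
lemma Hw_sym: "Hw w (y,x,z) = Hw w (x,y,z)" "Hw w (x,z,y) = Hw w (x,y,z)"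
  by (simp_all add: Hw_def mn_sym mx_sym md_sym)

lemma ord_vals: "x < y \<Longrightarrow> y < z \<Longrightarrow> mn (x,y,z) = x \<and> mx (x,y,z) = z \<and> md (x,y,z) = y"
  by (auto simp: mn_def mx_def md_def min_def max_def)

lemma Hw_nz_distinct: "Hw w (x,y,z) \<noteq> 0 \<Longrightarrow> x \<noteq> y \<and> y \<noteq> z \<and> x \<noteq> z"
  by (auto simp: Hw_def Phi_def good_def mn_def mx_def md_def min_def max_def split: if_splits)

lemma subst1:
  fixes g :: "real \<Rightarrow> ennreal"
  assumes [measurable]: "g \<in> borel_measurable borel"
  shows "(\<integral>\<^sup>+z. g z \<partial>lborel) = (\<integral>\<^sup>+u. g (t - u) \<partial>lborel)"
  using nn_integral_real_affine[OF assms, of "-1" t] by simp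

lemma subst2:
  fixes g :: "real \<Rightarrow> ennreal"
  assumes [measurable]: "g \<in> borel_measurable borel"
  shows "(\<integral>\<^sup>+z. g z \<partial>lborel) = (\<integral>\<^sup>+u. g (t + u) \<partial>lborel)"
  using nn_integral_real_affine[OF assms, of "1" t] by simp

context
  fixes w :: "real \<Rightarrow> real \<Rightarrow> real"
  assumes w_meas: "(\<lambda>p. w (fst p) (snd p)) \<in> borel_measurable borel"
    and w_nn: "\<And>u v. 0 \<le> w u v"
begin

lemma w_comp[measurable (raw)]:
  assumes f: "f \<in> borel_measurable M" and g: "g \<in> borel_measurable M"
  shows "(\<lambda>x. w (f x) (g x)) \<in> borel_measurable M"
proof -
  have w2: "(\<lambda>p. w (fst p) (snd p)) \<in> borel_measurable (borel \<Otimes>\<^sub>M borel)"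
    using w_meas by (simp add: borel_prod)
  show ?thesis using measurable_compose[OF measurable_Pair[OF f g] w2] by simp
qed

lemma good_meas[measurable]:
  assumes [measurable]: "f1 \<in> borel_measurable M" "f2 \<in> borel_measurable M" "f3 \<in> borel_measurable M" "f4 \<in> borel_measurable M"
  shows "Measurable.pred M (\<lambda>x. good (f1 x) (f2 x) (f3 x) (f4 x))"
  unfolding good_def by measurable

lemma Phi_comp[measurable (raw)]:
  assumes [measurable]: "f1 \<in> borel_measurable M" "f2 \<in> borel_measurable M" "f3 \<in> borel_measurable M" "f4 \<in> borel_measurable M"
  shows "(\<lambda>x. Phi w (f1 x) (f2 x) (f3 x) (f4 x)) \<in> borel_measurable M"
  unfolding Phi_def by measurable

lemma Hw_meas[measurable]: "Hw w \<in> borel_measurable borel"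
  unfolding Hw_def by measurable

lemma kf_comp[measurable (raw)]:
  assumes [measurable]: "f1 \<in> borel_measurable M" "f2 \<in> borel_measurable M"
  shows "(\<lambda>x. kf w (f1 x) (f2 x)) \<in> borel_measurable M"
  unfolding kf_def by measurable

lemma KK_comp[measurable (raw)]:
  assumes [measurable]: "f \<in> borel_measurable M"
  shows "(\<lambda>x. KK w (f x)) \<in> borel_measurable M"
proof -
  have "(\<lambda>s. \<integral>\<^sup>+u. ennreal (kf w s u) \<partial>lborel) \<in> borel_measurable borel"
    by measurable
  hence [measurable]: "KK w \<in> borel_measurable borel" unfolding KK_def by simp
  show ?thesis by measurable
qed


definition ordi :: "real \<Rightarrow> real \<Rightarrow> real \<Rightarrow> ennreal" where
  "ordi a b c = (if a < b \<and> b < c then 1 else 0)"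

lemma ordi_meas[measurable (raw)]:
  assumes [measurable]: "f1 \<in> borel_measurable M" "f2 \<in> borel_measurable M" "f3 \<in> borel_measurable M"
  shows "(\<lambda>x. ordi (f1 x) (f2 x) (f3 x)) \<in> borel_measurable M"
  unfolding ordi_def by measurable

lemma I_swap12:
  fixes F :: "real \<times> real \<times> real \<Rightarrow> ennreal"
  assumes [measurable]: "F \<in> borel_measurable borel"
  shows "(\<integral>\<^sup>+p. F p \<partial>lborel) = (\<integral>\<^sup>+p. F (fst (snd p), fst p, snd (snd p)) \<partial>lborel)"
proof -
  have sm: "(\<lambda>p::real\<times>real\<times>real. (fst (snd p), fst p, snd (snd p))) \<in> borel_measurable borel"
    by (rule borel_measurable_continuous_onI) (intro continuous_intros)
  have [measurable]: "(\<lambda>p. F (fst (snd p), fst p, snd (snd p))) \<in> borel_measurable borel"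
    using measurable_compose[OF sm assms] by simp
  show ?thesis
    by (simp add: nn_integral_triple swap12[of F])
qed

lemma I_swap23:
  fixes F :: "real \<times> real \<times> real \<Rightarrow> ennreal"
  assumes [measurable]: "F \<in> borel_measurable borel"
  shows "(\<integral>\<^sup>+p. F p \<partial>lborel) = (\<integral>\<^sup>+p. F (fst p, snd (snd p), fst (snd p)) \<partial>lborel)"
proof -
  have sm: "(\<lambda>p::real\<times>real\<times>real. (fst p, snd (snd p), fst (snd p))) \<in> borel_measurable borel"
    by (rule borel_measurable_continuous_onI) (intro continuous_intros)
  have [measurable]: "(\<lambda>p. F (fst p, snd (snd p), fst (snd p))) \<in> borel_measurable borel"
    using measurable_compose[OF sm assms] by simp
  show ?thesis
    by (simp add: nn_integral_triple swap23[of F])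
qed

lemma nn_add_borel:
  fixes f g :: "real \<times> real \<times> real \<Rightarrow> ennreal"
  assumes "f \<in> borel_measurable borel" "g \<in> borel_measurable borel"
  shows "(\<integral>\<^sup>+x. f x + g x \<partial>lborel) = (\<integral>\<^sup>+x. f x \<partial>lborel) + (\<integral>\<^sup>+x. g x \<partial>lborel)"
  using assms by (intro nn_integral_add) simp_all

lemma Hw_split:
  "ennreal (Hw w (x,y,z)) = ennreal (Hw w (x,y,z)) * ordi x y z + ennreal (Hw w (x,y,z)) * ordi y x z
     + ennreal (Hw w (x,y,z)) * ordi x z y + ennreal (Hw w (x,y,z)) * ordi z x y
     + ennreal (Hw w (x,y,z)) * ordi y z x + ennreal (Hw w (x,y,z)) * ordi z y x"
proof (cases "Hw w (x,y,z) = 0")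
  case True thus ?thesis by simp
next
  case False
  hence "x \<noteq> y \<and> y \<noteq> z \<and> x \<noteq> z" by (rule Hw_nz_distinct)
  thus ?thesis by (auto simp: ordi_def)
qed

lemma six_ennreal: "6 * g = g + g + g + g + g + (g::ennreal)"
proof -
  have "(6::ennreal) = 1+1+1+1+1+1" by simp
  show ?thesis unfolding \<open>(6::ennreal) = 1+1+1+1+1+1\<close> by (simp only: distrib_right mult_1_left)
qed

lemma sym6:
  "(\<integral>\<^sup>+p. ennreal (Hw w p) \<partial>lborel) =
   6 * (\<integral>\<^sup>+p. ennreal (Hw w p) * ordi (fst p) (fst (snd p)) (snd (snd p)) \<partial>lborel)"
proof -
  define G where "G a b c = (\<integral>\<^sup>+p. ennreal (Hw w p) * ordi (a p) (b p) (c p) \<partial>lborel)" for a b c :: "real \<times> real \<times> real \<Rightarrow> real"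
  let ?X = "\<lambda>p::real\<times>real\<times>real. fst p" and ?Y = "\<lambda>p::real\<times>real\<times>real. fst (snd p)" and ?Z = "\<lambda>p::real\<times>real\<times>real. snd (snd p)"
  have "(\<integral>\<^sup>+p. ennreal (Hw w p) \<partial>lborel) = G ?X ?Y ?Z + G ?Y ?X ?Z + G ?X ?Z ?Y + G ?Z ?X ?Y + G ?Y ?Z ?X + G ?Z ?Y ?X"
  proof -
    have "(\<integral>\<^sup>+p. ennreal (Hw w p) \<partial>lborel) = (\<integral>\<^sup>+p. ennreal (Hw w p) * ordi (?X p) (?Y p) (?Z p) + ennreal (Hw w p) * ordi (?Y p) (?X p) (?Z p)
     + ennreal (Hw w p) * ordi (?X p) (?Z p) (?Y p) + ennreal (Hw w p) * ordi (?Z p) (?X p) (?Y p)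
     + ennreal (Hw w p) * ordi (?Y p) (?Z p) (?X p) + ennreal (Hw w p) * ordi (?Z p) (?Y p) (?X p) \<partial>lborel)"
      by (intro nn_integral_cong) (metis Hw_split prod.collapse)
    also have "\<dots> = G ?X ?Y ?Z + G ?Y ?X ?Z + G ?X ?Z ?Y + G ?Z ?X ?Y + G ?Y ?Z ?X + G ?Z ?Y ?X"
      unfolding G_def by (simp add: nn_add_borel)
    finally show ?thesis .
  qed
  moreover have "G ?Y ?X ?Z = G ?X ?Y ?Z"
    unfolding G_def by (subst I_swap12) (simp_all add: Hw_sym)
  moreover have "G ?X ?Z ?Y = G ?X ?Y ?Z"
    unfolding G_def by (subst I_swap23) (simp_all add: Hw_sym)
  moreover have "G ?Z ?X ?Y = G ?Y ?X ?Z"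
    unfolding G_def by (subst I_swap23) (simp_all add: Hw_sym)
  moreover have "G ?Y ?Z ?X = G ?X ?Z ?Y"
    unfolding G_def by (subst I_swap12) (simp_all add: Hw_sym)
  moreover have "G ?Z ?Y ?X = G ?Z ?X ?Y"
    unfolding G_def by (subst I_swap12) (simp_all add: Hw_sym)
  ultimately have "(\<integral>\<^sup>+p. ennreal (Hw w p) \<partial>lborel) = 6 * G ?X ?Y ?Z"
    by (simp only: six_ennreal)
  thus ?thesis unfolding G_def .
qed


lemma Hw_ord: "ennreal (Hw w (x,y,z)) * ordi x y z = ennreal (Phi w x (y - x) (z - y) (1 - z))"
proof (cases "x < y \<and> y < z")
  case True
  thus ?thesis using ord_vals[of x y z] by (simp add: ordi_def Hw_def)
next
  case False
  hence "\<not> good x (y - x) (z - y) (1 - z)" by (auto simp: good_def)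
  thus ?thesis using False by (auto simp: ordi_def Phi_def)
qed

lemma ordered_to_u:
  "(\<integral>\<^sup>+p. ennreal (Hw w p) * ordi (fst p) (fst (snd p)) (snd (snd p)) \<partial>lborel) =
   (\<integral>\<^sup>+u1. \<integral>\<^sup>+u2. \<integral>\<^sup>+u3. ennreal (Phi w (1/2 - u1) (1/2 - u2) (1/2 - u3) (u1 + u2 + u3 - 1/2)) \<partial>lborel \<partial>lborel \<partial>lborel)"
proof -
  have "(\<integral>\<^sup>+p. ennreal (Hw w p) * ordi (fst p) (fst (snd p)) (snd (snd p)) \<partial>lborel) =
     (\<integral>\<^sup>+x. \<integral>\<^sup>+y. \<integral>\<^sup>+z. ennreal (Hw w (x,y,z)) * ordi x y z \<partial>lborel \<partial>lborel \<partial>lborel)"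
    by (subst nn_integral_triple) simp_all
  also have "\<dots> = (\<integral>\<^sup>+x. \<integral>\<^sup>+y. \<integral>\<^sup>+z. ennreal (Phi w x (y - x) (z - y) (1 - z)) \<partial>lborel \<partial>lborel \<partial>lborel)"
    by (simp only: Hw_ord)
  also have "\<dots> = (\<integral>\<^sup>+x. \<integral>\<^sup>+y. \<integral>\<^sup>+u3. ennreal (Phi w x (y - x) (1/2 - u3) (1/2 - y + u3)) \<partial>lborel \<partial>lborel \<partial>lborel)"
  proof (rule nn_integral_cong, rule nn_integral_cong)
    fix x y :: real
    show "(\<integral>\<^sup>+z. ennreal (Phi w x (y - x) (z - y) (1 - z)) \<partial>lborel) =
          (\<integral>\<^sup>+u3. ennreal (Phi w x (y - x) (1/2 - u3) (1/2 - y + u3)) \<partial>lborel)"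
      by (subst subst1[where t = "y + 1/2"]) (simp_all add: algebra_simps)
  qed
  also have "\<dots> = (\<integral>\<^sup>+x. \<integral>\<^sup>+u2. \<integral>\<^sup>+u3. ennreal (Phi w x (1/2 - u2) (1/2 - u3) (u2 + u3 - x)) \<partial>lborel \<partial>lborel \<partial>lborel)"
  proof (rule nn_integral_cong)
    fix x :: real
    show "(\<integral>\<^sup>+y. \<integral>\<^sup>+u3. ennreal (Phi w x (y - x) (1/2 - u3) (1/2 - y + u3)) \<partial>lborel \<partial>lborel) =
          (\<integral>\<^sup>+u2. \<integral>\<^sup>+u3. ennreal (Phi w x (1/2 - u2) (1/2 - u3) (u2 + u3 - x)) \<partial>lborel \<partial>lborel)"
      by (subst subst1[where t = "x + 1/2"]) (simp_all add: algebra_simps)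
  qed
  also have "\<dots> = (\<integral>\<^sup>+u1. \<integral>\<^sup>+u2. \<integral>\<^sup>+u3. ennreal (Phi w (1/2 - u1) (1/2 - u2) (1/2 - u3) (u1 + u2 + u3 - 1/2)) \<partial>lborel \<partial>lborel \<partial>lborel)"
    by (subst subst1[where t = "1/2"]) (simp_all add: algebra_simps)
  finally show ?thesis .
qed


lemma kf_nn: "0 \<le> kf w s u"
  by (simp add: kf_def w_nn)

lemma Phi_kf: "Phi w (1/2 - u1) (1/2 - u2) (1/2 - u3) (u1 + u2 + u3 - 1/2) = kf w (u1 + u2) u1 * kf w (1 - u1 - u2) u3"
proof -
  have e: "1/2 - (u1 + u2 + u3 - 1/2) = 1 - u1 - u2 - u3" by simp
  show ?thesis unfolding Phi_def kf_def good_def e by (auto simp: algebra_simps)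
qed

lemma u_to_K:
  "(\<integral>\<^sup>+u1. \<integral>\<^sup>+u2. \<integral>\<^sup>+u3. ennreal (Phi w (1/2 - u1) (1/2 - u2) (1/2 - u3) (u1 + u2 + u3 - 1/2)) \<partial>lborel \<partial>lborel \<partial>lborel)
   = (\<integral>\<^sup>+s. KK w s * KK w (1 - s) \<partial>lborel)"
proof -
  have "(\<integral>\<^sup>+u1. \<integral>\<^sup>+u2. \<integral>\<^sup>+u3. ennreal (Phi w (1/2 - u1) (1/2 - u2) (1/2 - u3) (u1 + u2 + u3 - 1/2)) \<partial>lborel \<partial>lborel \<partial>lborel)
     = (\<integral>\<^sup>+u1. \<integral>\<^sup>+u2. ennreal (kf w (u1 + u2) u1) * KK w (1 - u1 - u2) \<partial>lborel \<partial>lborel)"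
  proof (rule nn_integral_cong, rule nn_integral_cong)
    fix u1 u2 :: real
    have "(\<integral>\<^sup>+u3. ennreal (Phi w (1/2 - u1) (1/2 - u2) (1/2 - u3) (u1 + u2 + u3 - 1/2)) \<partial>lborel)
        = (\<integral>\<^sup>+u3. ennreal (kf w (u1 + u2) u1) * ennreal (kf w (1 - u1 - u2) u3) \<partial>lborel)"
      by (simp only: Phi_kf ennreal_mult kf_nn)
    also have "\<dots> = ennreal (kf w (u1 + u2) u1) * KK w (1 - u1 - u2)"
      unfolding KK_def by (rule nn_integral_cmult) simp
    finally show "(\<integral>\<^sup>+u3. ennreal (Phi w (1/2 - u1) (1/2 - u2) (1/2 - u3) (u1 + u2 + u3 - 1/2)) \<partial>lborel)
        = ennreal (kf w (u1 + u2) u1) * KK w (1 - u1 - u2)" .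
  qed
  also have "\<dots> = (\<integral>\<^sup>+u1. \<integral>\<^sup>+s. ennreal (kf w s u1) * KK w (1 - s) \<partial>lborel \<partial>lborel)"
  proof (rule nn_integral_cong)
    fix u1 :: real
    show "(\<integral>\<^sup>+u2. ennreal (kf w (u1 + u2) u1) * KK w (1 - u1 - u2) \<partial>lborel) =
          (\<integral>\<^sup>+s. ennreal (kf w s u1) * KK w (1 - s) \<partial>lborel)"
      by (subst subst2[where t = "- u1"]) (simp_all add: algebra_simps)
  qed
  also have "\<dots> = (\<integral>\<^sup>+s. \<integral>\<^sup>+u1. ennreal (kf w s u1) * KK w (1 - s) \<partial>lborel \<partial>lborel)"
  proof -
    have m: "(\<lambda>(u1, s). ennreal (kf w s u1) * KK w (1 - s)) \<in> borel_measurable (lborel \<Otimes>\<^sub>M lborel)"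
      by measurable
    show ?thesis using lborel_pair.Fubini'[OF m] by simp
  qed
  also have "\<dots> = (\<integral>\<^sup>+s. KK w s * KK w (1 - s) \<partial>lborel)"
  proof (rule nn_integral_cong)
    fix s :: real
    show "(\<integral>\<^sup>+u1. ennreal (kf w s u1) * KK w (1 - s) \<partial>lborel) = KK w s * KK w (1 - s)"
      unfolding KK_def by (rule nn_integral_multc) simp
  qed
  finally show ?thesis .
qed

theorem pipeline:
  "(\<integral>\<^sup>+p. ennreal (Hw w p) \<partial>lborel) = 6 * (\<integral>\<^sup>+s. KK w s * KK w (1 - s) \<partial>lborel)"
  by (simp only: sym6 ordered_to_u u_to_K)

end

declare w_comp[measurable del] good_meas[measurable del] Phi_comp[measurable del] Hw_meas[measurable del] kf_comp[measurable del] KK_comp[measurable del] ordi_meas[measurable del]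


lemma nn_FTC:
  fixes f F :: "real \<Rightarrow> real"
  assumes "a \<le> b" "continuous_on {a..b} F"
    and "\<And>x. a < x \<Longrightarrow> x < b \<Longrightarrow> (F has_real_derivative f x) (at x)"
    and "\<And>x. a \<le> x \<Longrightarrow> x \<le> b \<Longrightarrow> 0 \<le> f x"
  shows "(\<integral>\<^sup>+x. ennreal (f x) * indicator {a..b} x \<partial>lborel) = ennreal (F b - F a)"
proof -
  have "(f has_integral F b - F a) {a..b}"
    using assms(3) by (intro fundamental_theorem_of_calculus_interior[OF assms(1,2)])
      (auto simp: has_real_derivative_iff_has_vector_derivative[symmetric])
  thus ?thesis using assms(4) by (intro nn_integral_has_integral_lebesgue') auto
qed

definition AF :: "real \<Rightarrow> real \<Rightarrow> real" where
  "AF s u = (2*u - s)/4 * sqrt (u*(s-u)) + s^2/8 * arcsin ((2*u - s)/s)"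

lemma AF_deriv:
  assumes "0 < u" "u < s"
  shows "(AF s has_real_derivative sqrt (u*(s-u))) (at u)"
proof -
  define R where "R = sqrt (u*(s-u))"
  have s0: "s > 0" using assms by simp
  have q0: "u*(s-u) > 0" using assms by simp
  have R0: "R > 0" using q0 by (simp add: R_def)
  have R2: "R^2 = u*(s-u)" using q0 by (simp add: R_def)
  have a1: "-1 < (2*u - s)/s" "(2*u - s)/s < 1" using assms s0 by (simp_all add: field_simps)
  have dq: "((\<lambda>u. u*(s-u)) has_real_derivative (s - 2*u)) (at u)"
    by (auto intro!: derivative_eq_intros simp: algebra_simps)
  have d1: "((\<lambda>u. sqrt (u*(s-u))) has_real_derivative (inverse (sqrt (u*(s-u))) / 2 * (s - 2*u))) (at u)"
    using DERIV_chain2[OF DERIV_real_sqrt[OF q0] dq] by simp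
  have dl: "((\<lambda>u. (2*u - s)/s) has_real_derivative (2/s)) (at u)"
    using s0 by (auto intro!: derivative_eq_intros simp: field_simps)
  have d2: "((\<lambda>u. arcsin ((2*u - s)/s)) has_real_derivative (inverse (sqrt (1 - ((2*u - s)/s)^2)) * (2/s))) (at u)"
    using DERIV_chain2[OF DERIV_arcsin[OF a1] dl] by simp
  have dl2: "((\<lambda>u. (2*u - s)/4) has_real_derivative (1/2)) (at u)"
    by (auto intro!: derivative_eq_intros simp: algebra_simps)
  have D: "(AF s has_real_derivative ((2*u - s)/4 * (inverse (sqrt (u*(s-u))) / 2 * (s - 2*u)) + (1/2) * sqrt (u*(s-u))
            + s^2/8 * (inverse (sqrt (1 - ((2*u - s)/s)^2)) * (2/s)))) (at u)"
    unfolding AF_def[abs_def]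
    by (intro DERIV_add DERIV_mult' DERIV_cmult dl2 d1 d2)
  have sq: "sqrt (1 - ((2*u - s)/s)^2) = 2*R/s"
  proof -
    have "1 - ((2*u - s)/s)^2 = (2*R/s)^2" using s0 R2 by (simp add: field_simps power2_eq_square)
    thus ?thesis using R0 s0 by simp
  qed
  have "(2*u - s)/4 * (inverse (sqrt (u*(s-u))) / 2 * (s - 2*u)) + (1/2) * sqrt (u*(s-u))
            + s^2/8 * (inverse (sqrt (1 - ((2*u - s)/s)^2)) * (2/s)) = R"
    unfolding sq R_def[symmetric] using R0 s0 R2
    by (simp add: field_simps power2_eq_square)
  thus ?thesis using D by (simp add: R_def)
qed


lemma AF_cont:
  assumes "0 < s" "0 \<le> a" "b \<le> s"
  shows "continuous_on {a..b} (AF s)"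
proof -
  have "\<forall>x\<in>{a..b}. -1 \<le> (2*x - s)/s \<and> (2*x - s)/s \<le> 1"
    using assms by (auto simp: field_simps)
  thus ?thesis unfolding AF_def[abs_def] using assms
    by (intro continuous_intros) auto
qed

definition kk2 :: "real \<Rightarrow> real \<Rightarrow> real" where
  "kk2 s u = (if 0 < u \<and> u < 1/2 \<and> 0 < s - u \<and> s - u < 1/2 then sqrt (u*(s-u)) else 0)"

lemma K2_small:
  assumes "0 < s" "s \<le> 1/2"
  shows "(\<integral>\<^sup>+u. ennreal (kk2 s u) \<partial>lborel) = ennreal (pi * s^2 / 8)"
proof -
  have "(\<integral>\<^sup>+u. ennreal (kk2 s u) \<partial>lborel) = (\<integral>\<^sup>+u. ennreal (sqrt (u*(s-u))) * indicator {0..s} u \<partial>lborel)"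
    by (rule nn_integral_cong) (use assms in \<open>auto simp: kk2_def indicator_def\<close>)
  also have "\<dots> = ennreal (AF s s - AF s 0)"
    using assms by (intro nn_FTC AF_cont AF_deriv) (auto intro!: mult_nonneg_nonneg)
  also have "AF s s - AF s 0 = pi * s^2 / 8"
    using assms by (simp add: AF_def field_simps)
  finally show ?thesis .
qed

lemma K2_big:
  assumes "1/2 < s" "s < 1"
  shows "(\<integral>\<^sup>+u. ennreal (kk2 s u) \<partial>lborel) = ennreal (AF s (1/2) - AF s (s - 1/2))"
proof -
  have "AE u in lborel. u \<noteq> s - 1/2" "AE u in lborel. u \<noteq> 1/2" by (rule AE_lborel_singleton)+
  hence "AE u in lborel. ennreal (kk2 s u) = ennreal (sqrt (u*(s-u))) * indicator {s - 1/2..1/2} u"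
    by eventually_elim (use assms in \<open>auto simp: kk2_def indicator_def\<close>)
  hence "(\<integral>\<^sup>+u. ennreal (kk2 s u) \<partial>lborel) = (\<integral>\<^sup>+u. ennreal (sqrt (u*(s-u))) * indicator {s - 1/2..1/2} u \<partial>lborel)"
    by (rule nn_integral_cong_AE)
  also have "\<dots> = ennreal (AF s (1/2) - AF s (s - 1/2))"
    using assms by (intro nn_FTC AF_cont AF_deriv) (auto intro!: mult_nonneg_nonneg)
  finally show ?thesis .
qed

lemma G_eq:
  assumes "0 < s" "s < 1/2"
  shows "AF (1 - s) (1/2) - AF (1 - s) (1 - s - 1/2) = s * sqrt (1 - 2* s) / 4 + (1 - s)^2 / 4 * arcsin (s / (1 - s))"
proof -
  have q: "sqrt (1/2 * (1 - s - 1/2)) = sqrt (1 - 2* s) / 2"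
  proof -
    have e: "1/2 * (1 - s - 1/2) = (1 - 2* s) / 4" by simp
    have s4: "sqrt (4::real) = 2"
    proof -
      have "(4::real) = 2^2" by simp
      thus ?thesis by (metis real_sqrt_abs abs_numeral)
    qed
    show ?thesis unfolding e real_sqrt_divide s4 ..
  qed
  have q2: "sqrt ((1 - s - 1/2) * (1 - s - (1 - s - 1/2))) = sqrt (1 - 2* s) / 2"
    using q by (simp add: algebra_simps)
  have a1: "(2 * (1/2) - (1 - s)) / (1 - s) = s / (1 - s)" by simp
  have a2: "(2 * (1 - s - 1/2) - (1 - s)) / (1 - s) = - (s / (1 - s))" using assms by (simp add: field_simps)
  have r: "s / (1 - s) \<le> 1" "-1 \<le> s / (1 - s)" using assms by (simp_all add: field_simps)
  show ?thesis unfolding AF_def a1 a2 arcsin_minus[OF r(2) r(1)] q q2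
    using assms by (simp add: field_simps)
qed


definition PP :: "real \<Rightarrow> real" where "PP s = s^3/3 - s^4/2 + s^5/5 - 1/30"
definition MM :: "real \<Rightarrow> real" where
  "MM s = -68/1575 - 31/3150 * s + 1/525 * s^2 + 1/70 * s^3 + 1/5 * s^4"
definition PhiF :: "real \<Rightarrow> real" where
  "PhiF s = PP s * arcsin (s / (1 - s)) + MM s * sqrt (1 - 2 * s)"
definition phi :: "real \<Rightarrow> real" where
  "phi s = s^3 * sqrt (1 - 2 * s) + s^2 * (1 - s)^2 * arcsin (s / (1 - s))"

lemma PhiF_deriv:
  assumes "0 < s" "s < 1/2"
  shows "(PhiF has_real_derivative phi s) (at s)"
proof -
  define Q where "Q = sqrt (1 - 2 * s)"
  have q0: "1 - 2 * s > 0" using assms by simp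
  have Q0: "Q > 0" using q0 by (simp add: Q_def)
  have Q2: "Q^2 = 1 - 2 * s" using q0 by (simp add: Q_def)
  have s1: "1 - s > 0" using assms by simp
  have g1: "-1 < s / (1 - s)" "s / (1 - s) < 1" using assms s1 by (simp_all add: field_simps)
  have dg: "((\<lambda>s. s / (1 - s)) has_real_derivative (1 / (1 - s)^2)) (at s)"
    using s1 by (auto intro!: derivative_eq_intros simp: field_simps power2_eq_square)
  have da: "((\<lambda>s. arcsin (s / (1 - s))) has_real_derivative (inverse (sqrt (1 - (s / (1 - s))^2)) * (1 / (1 - s)^2))) (at s)"
    using DERIV_chain2[OF DERIV_arcsin[OF g1] dg] by simp
  have dl: "((\<lambda>s. 1 - 2 * s) has_real_derivative (-2)) (at s)"
    by (auto intro!: derivative_eq_intros)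
  have dq: "((\<lambda>s. sqrt (1 - 2 * s)) has_real_derivative (inverse (sqrt (1 - 2 * s)) / 2 * (-2))) (at s)"
    using DERIV_chain2[OF DERIV_real_sqrt[OF q0] dl] by simp
  have dP: "(PP has_real_derivative (s^2 - 2 * s^3 + s^4)) (at s)"
    unfolding PP_def[abs_def] by (auto intro!: derivative_eq_intros simp: algebra_simps)
  have dM: "(MM has_real_derivative (- 31/3150 + 2/525 * s + 3/70 * s^2 + 4/5 * s^3)) (at s)"
    unfolding MM_def[abs_def] by (auto intro!: derivative_eq_intros simp: algebra_simps)
  have D: "(PhiF has_real_derivative
      (PP s * (inverse (sqrt (1 - (s / (1 - s))^2)) * (1 / (1 - s)^2)) + (s^2 - 2 * s^3 + s^4) * arcsin (s / (1 - s))
       + (MM s * (inverse (sqrt (1 - 2 * s)) / 2 * (-2)) + (- 31/3150 + 2/525 * s + 3/70 * s^2 + 4/5 * s^3) * sqrt (1 - 2 * s)))) (at s)"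
    unfolding PhiF_def[abs_def]
    by (intro DERIV_add DERIV_mult' dP dM da dq)
  have sq: "sqrt (1 - (s / (1 - s))^2) = Q / (1 - s)"
  proof -
    have e1: "(1 - s)^2 - s^2 = Q^2" using Q2 by (simp add: power2_eq_square algebra_simps)
    have "1 - (s / (1 - s))^2 = ((1 - s)^2 - s^2) / (1 - s)^2" using s1 by (simp add: field_simps)
    hence "1 - (s / (1 - s))^2 = (Q / (1 - s))^2" unfolding e1 by (simp add: power_divide)
    thus ?thesis using Q0 s1 by simp
  qed
  define dM where "dM = - 31/3150 + 2/525 * s + 3/70 * s^2 + 4/5 * s^3"
  define RR where "RR = 1/30 + s/30 + s^2/30 - 3/10 * s^3 + 1/5 * s^4"
  have e3: "PP s = - (1 - s) * RR" unfolding PP_def RR_def by (simp add: field_simps eval_nat_numeral)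
  have poly: "- RR - MM s + dM * (1 - 2 * s) = s^3 * (1 - 2 * s)"
    unfolding MM_def RR_def dM_def by algebra
  have e1: "PP s * (inverse (Q / (1 - s)) * (1 / (1 - s)^2)) = - RR / Q"
  proof -
    have "inverse (Q / (1 - s)) * (1 / (1 - s)^2) = 1 / (Q * (1 - s))"
    proof -
      have ne: "1 - s \<noteq> 0" "Q \<noteq> 0" using s1 Q0 by auto
      show ?thesis using ne by (simp add: inverse_divide power2_eq_square)
    qed
    moreover have "(s - 1) * RR / (Q * (1 - s)) = - (RR / Q)"
    proof -
      have ne: "1 - s \<noteq> 0" "Q \<noteq> 0" using s1 Q0 by auto
      have "(s - 1) * RR / (Q * (1 - s)) = - ((1 - s) * RR) / ((1 - s) * Q)" by (simp add: algebra_simps)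
      also have "\<dots> = - (RR / Q)" using ne by simp
      finally show ?thesis .
    qed
    ultimately show ?thesis unfolding e3 by simp
  qed
  have e2: "MM s * (inverse Q / 2 * (-2)) = - MM s / Q" by (simp add: inverse_eq_divide)
  have e4: "- RR / Q + (- MM s / Q) + dM * Q = s^3 * Q"
  proof -
    have "- RR / Q + (- MM s / Q) + dM * Q = (- RR - MM s + dM * Q^2) / Q"
      using Q0 by (simp add: field_simps power2_eq_square)
    also have "\<dots> = s^3 * (1 - 2 * s) / Q" unfolding Q2 poly ..
    also have "\<dots> = s^3 * Q" unfolding Q2[symmetric] using Q0 by (simp add: power2_eq_square)
    finally show ?thesis .
  qed
  have e5: "s^2 - 2 * s^3 + s^4 = s^2 * (1 - s)^2" by algebra
  have "PP s * (inverse (sqrt (1 - (s / (1 - s))^2)) * (1 / (1 - s)^2)) + (s^2 - 2 * s^3 + s^4) * arcsin (s / (1 - s))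
       + (MM s * (inverse (sqrt (1 - 2 * s)) / 2 * (-2)) + (- 31/3150 + 2/525 * s + 3/70 * s^2 + 4/5 * s^3) * sqrt (1 - 2 * s))
     = phi s"
  proof -
    have "PP s * (inverse (sqrt (1 - (s / (1 - s))^2)) * (1 / (1 - s)^2)) + (s^2 - 2 * s^3 + s^4) * arcsin (s / (1 - s))
       + (MM s * (inverse (sqrt (1 - 2 * s)) / 2 * (-2)) + (- 31/3150 + 2/525 * s + 3/70 * s^2 + 4/5 * s^3) * sqrt (1 - 2 * s))
      = (- RR / Q + (- MM s / Q) + dM * Q) + (s^2 - 2 * s^3 + s^4) * arcsin (s / (1 - s))"
      unfolding sq Q_def[symmetric] e1 e2 dM_def[symmetric] by simp
    also have "\<dots> = phi s" unfolding e4 e5 phi_def Q_def[symmetric] ..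
    finally show ?thesis .
  qed
  thus ?thesis using D by simp
qed

lemma phi_integral:
  assumes c0: "0 \<le> c"
  shows "(\<integral>\<^sup>+s. ennreal (c * phi s) * indicator {0..1/2} s \<partial>lborel) = ennreal (c * (68/1575 - pi/120))"
proof -
  have c: "continuous_on {0..1/2} (\<lambda>s. c * PhiF s)"
  proof -
    have "\<forall>x\<in>{0..1/2::real}. -1 \<le> x / (1 - x) \<and> x / (1 - x) \<le> 1"
      by (auto simp: field_simps)
    moreover have "\<forall>x\<in>{0..1/2::real}. 1 - x \<noteq> 0" by auto
    ultimately show ?thesis unfolding PhiF_def[abs_def] PP_def MM_def
      by (intro continuous_intros) auto
  qed
  have nn: "0 \<le> c * phi s" if "0 \<le> s" "s \<le> 1/2" for s
  proof -
    have "s / (1 - s) \<in> {0..1}" using that by (auto simp: field_simps)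
    hence "arcsin (s / (1 - s)) \<ge> 0" by (rule arcsin_nonneg)
    hence "0 \<le> phi s" unfolding phi_def using that by (intro add_nonneg_nonneg mult_nonneg_nonneg) auto
    thus ?thesis using c0 by simp
  qed
  have "(\<integral>\<^sup>+s. ennreal (c * phi s) * indicator {0..1/2} s \<partial>lborel) = ennreal (c * PhiF (1/2) - c * PhiF 0)"
    by (intro nn_FTC c DERIV_cmult PhiF_deriv nn) auto
  also have "c * PhiF (1/2) - c * PhiF 0 = c * (68/1575 - pi/120)"
    by (simp add: PhiF_def PP_def MM_def power_divide field_simps)
  finally show ?thesis .
qed


lemma sym_split:
  fixes F :: "real \<Rightarrow> ennreal"
  assumes [measurable]: "F \<in> borel_measurable borel" and psym: "\<And>s. F (1 - s) = F s"
  shows "(\<integral>\<^sup>+s. F s \<partial>lborel) = 2 * (\<integral>\<^sup>+s. F s * indicator {..1/2} s \<partial>lborel)"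
proof -
  have m1: "(\<lambda>s. F s * indicator {..1/2} s) \<in> borel_measurable borel" by measurable
  have m2: "(\<lambda>s. F s * indicator {1/2<..} s) \<in> borel_measurable borel" by measurable
  have "(\<integral>\<^sup>+s. F s \<partial>lborel) =
        (\<integral>\<^sup>+s. F s * indicator {..1/2} s + F s * indicator {1/2<..} s \<partial>lborel)"
    by (intro nn_integral_cong) (auto simp: indicator_def)
  also have "\<dots> = (\<integral>\<^sup>+s. F s * indicator {..1/2} s \<partial>lborel) + (\<integral>\<^sup>+s. F s * indicator {1/2<..} s \<partial>lborel)"
    using m1 m2 by (intro nn_integral_add) simp_all
  also have "(\<integral>\<^sup>+s. F s * indicator {1/2<..} s \<partial>lborel) = (\<integral>\<^sup>+u. F (1 - u) * indicator {1/2<..} (1 - u) \<partial>lborel)"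
    using subst1[OF m2, of 1] by simp
  also have "\<dots> = (\<integral>\<^sup>+u. F u * indicator {..1/2} u \<partial>lborel)"
  proof (rule nn_integral_cong_AE)
    show "AE u in lborel. F (1 - u) * indicator {1/2<..} (1 - u) = F u * indicator {..1/2} u"
      using AE_lborel_singleton[of "1/2::real"] by eventually_elim (auto simp: psym indicator_def)
  qed
  finally show ?thesis by (simp only: mult_2)
qed


definition w1 :: "real \<Rightarrow> real \<Rightarrow> real" where "w1 u v = 1"
definition w2 :: "real \<Rightarrow> real \<Rightarrow> real" where "w2 u v = sqrt \<bar>u * v\<bar>"

lemma w1_meas: "(\<lambda>p. w1 (fst p) (snd p)) \<in> borel_measurable borel" by (simp add: w1_def)
lemma w2_meas: "(\<lambda>p. w2 (fst p) (snd p)) \<in> borel_measurable borel"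
  unfolding w2_def by (rule borel_measurable_continuous_onI) (intro continuous_intros)
lemma w1_nn: "0 \<le> w1 u v" by (simp add: w1_def)
lemma w2_nn: "0 \<le> w2 u v" by (simp add: w2_def)

definition k2 :: "real \<Rightarrow> real" where
  "k2 s = (if 0 < s \<and> s \<le> 1/2 then pi * s^2 / 8 else if 1/2 < s \<and> s < 1 then AF s (1/2) - AF s (s - 1/2) else 0)"

lemma KK_w2: "KK w2 s = ennreal (k2 s)"
proof -
  have kf: "kf w2 s u = kk2 s u" for u by (simp add: kf_def kk2_def w2_def abs_of_pos)
  show ?thesis
  proof (cases "0 < s \<and> s \<le> 1/2")
    case True thus ?thesis unfolding KK_def kf using K2_small[of s] by (simp add: k2_def)
  next
    case F: False
    show ?thesis
    proof (cases "1/2 < s \<and> s < 1")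
      case True thus ?thesis unfolding KK_def kf using K2_big[of s] F by (simp add: k2_def)
    next
      case False
      hence "kk2 s u = 0" for u using F by (auto simp: kk2_def)
      thus ?thesis unfolding KK_def kf using F False by (auto simp: k2_def)
    qed
  qed
qed

lemma k2_big_eq:
  assumes "1/2 < s" "s < 1"
  shows "k2 s = (1 - s) * sqrt (1 - 2 * (1 - s)) / 4 + s^2 / 4 * arcsin ((1 - s) / s)"
proof -
  have "AF (1 - (1 - s)) (1/2) - AF (1 - (1 - s)) (1 - (1 - s) - 1/2) =
     (1 - s) * sqrt (1 - 2 * (1 - s)) / 4 + (1 - (1 - s))^2 / 4 * arcsin ((1 - s) / (1 - (1 - s)))"
    by (rule G_eq) (use assms in auto)
  thus ?thesis using assms by (simp add: k2_def)
qed

lemma k2_nn: "0 \<le> k2 s"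
proof -
  consider "0 < s \<and> s \<le> 1/2" | "1/2 < s \<and> s < 1" | "\<not> (0 < s \<and> s \<le> 1/2) \<and> \<not> (1/2 < s \<and> s < 1)" by blast
  thus ?thesis
  proof cases
    case 1 thus ?thesis by (simp add: k2_def)
  next
    case 2
    have "(1 - s) / s \<in> {0..1}" using 2 by (auto simp: field_simps)
    hence "arcsin ((1 - s) / s) \<ge> 0" by (rule arcsin_nonneg)
    thus ?thesis using 2 k2_big_eq[of s] by (auto intro!: add_nonneg_nonneg mult_nonneg_nonneg divide_nonneg_nonneg)
  next
    case 3 thus ?thesis by (auto simp: k2_def)
  qed
qed


lemma k2_prod:
  assumes "s \<le> 1/2"
  shows "k2 s * k2 (1 - s) = (if 0 \<le> s then pi / 32 * phi s else 0)"
proof -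
  consider "s < 0" | "s = 0" | "0 < s \<and> s < 1/2" | "s = 1/2" using assms by linarith
  thus ?thesis
  proof cases
    case 1 thus ?thesis by (simp add: k2_def)
  next
    case 2 thus ?thesis by (simp add: k2_def phi_def)
  next
    case 3
    have a: "k2 s = pi * s^2 / 8" using 3 by (simp add: k2_def)
    have b: "k2 (1 - s) = s * sqrt (1 - 2 * s) / 4 + (1 - s)^2 / 4 * arcsin (s / (1 - s))"
      using k2_big_eq[of "1 - s"] 3 by simp
    show ?thesis unfolding a b phi_def using 3 by (simp add: field_simps power2_eq_square power3_eq_cube)
  next
    case 4
    have k: "k2 (1/2) = pi / 32" by (simp add: k2_def power2_eq_square)
    have p: "phi (1/2) = pi / 32" by (simp add: phi_def power2_eq_square)
    from 4 have s: "s = 1/2" .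
    show ?thesis unfolding s by (simp add: k p power2_eq_square)
  qed
qed

lemma phi_nn: "0 \<le> s \<Longrightarrow> s \<le> 1/2 \<Longrightarrow> 0 \<le> phi s"
proof -
  assume a: "0 \<le> s" "s \<le> 1/2"
  have "s / (1 - s) \<in> {0..1}" using a by (auto simp: field_simps)
  hence "arcsin (s / (1 - s)) \<ge> 0" by (rule arcsin_nonneg)
  thus ?thesis unfolding phi_def using a by (intro add_nonneg_nonneg mult_nonneg_nonneg) auto
qed

lemma J2: "(\<integral>\<^sup>+s. KK w2 s * KK w2 (1 - s) \<partial>lborel) = ennreal (pi / 16 * (68/1575 - pi/120))"
proof -
  note [measurable] = KK_comp[OF w2_meas w2_nn]
  have c0: "0 \<le> 68/1575 - pi/120" using pi_less_4 by simp
  have "(\<integral>\<^sup>+s. KK w2 s * KK w2 (1 - s) \<partial>lborel) = 2 * (\<integral>\<^sup>+s. KK w2 s * KK w2 (1 - s) * indicator {..1/2} s \<partial>lborel)"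
    by (rule sym_split) (measurable, simp add: mult.commute)
  also have "(\<integral>\<^sup>+s. KK w2 s * KK w2 (1 - s) * indicator {..1/2} s \<partial>lborel) =
             (\<integral>\<^sup>+s. ennreal (pi / 32 * phi s) * indicator {0..1/2} s \<partial>lborel)"
  proof (rule nn_integral_cong)
    fix s :: real
    show "KK w2 s * KK w2 (1 - s) * indicator {..1/2} s = ennreal (pi / 32 * phi s) * indicator {0..1/2} s"
    proof (cases "s \<le> 1/2")
      case True
      have "KK w2 s * KK w2 (1 - s) = ennreal (k2 s * k2 (1 - s))"
        by (simp add: KK_w2 ennreal_mult k2_nn)
      also have "\<dots> = ennreal (if 0 \<le> s then pi / 32 * phi s else 0)" using k2_prod[OF True] by simp
      finally show ?thesis using True by (auto simp: indicator_def)
    next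
      case False thus ?thesis by (simp add: indicator_def)
    qed
  qed
  also have "\<dots> = ennreal (pi / 32 * (68/1575 - pi/120))"
    by (rule phi_integral) simp
  finally show ?thesis using c0 by (simp add: ennreal_mult[symmetric] ennreal_numeral[symmetric] del: ennreal_numeral) 
qed


definition k1 :: "real \<Rightarrow> real" where
  "k1 s = (if 0 < s \<and> s \<le> 1/2 then s else if 1/2 < s \<and> s < 1 then 1 - s else 0)"

lemma KK_w1: "KK w1 s = ennreal (k1 s)"
proof -
  have "KK w1 s = (\<integral>\<^sup>+u. indicator {u. 0 < u \<and> u < 1/2 \<and> 0 < s - u \<and> s - u < 1/2} u \<partial>lborel)"
    unfolding KK_def by (intro nn_integral_cong) (simp add: kf_def w1_def indicator_def)
  also have "\<dots> = emeasure lborel {u. 0 < u \<and> u < 1/2 \<and> 0 < s - u \<and> s - u < 1/2}"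
    by (rule nn_integral_indicator) measurable
  also have "\<dots> = ennreal (k1 s)"
  proof -
    consider "0 < s \<and> s \<le> 1/2" | "1/2 < s \<and> s < 1" | "\<not> (0 < s \<and> s \<le> 1/2) \<and> \<not> (1/2 < s \<and> s < 1)" by blast
    thus ?thesis
    proof cases
      case 1
      hence e: "{u. 0 < u \<and> u < 1/2 \<and> 0 < s - u \<and> s - u < 1/2} = {0<..<s}" by auto
      show ?thesis unfolding e using 1 by (simp add: k1_def)
    next
      case 2
      hence e: "{u. 0 < u \<and> u < 1/2 \<and> 0 < s - u \<and> s - u < 1/2} = {s - 1/2<..<1/2}" by auto
      show ?thesis unfolding e using 2 by (simp add: k1_def)
    next
      case 3
      hence e: "{u. 0 < u \<and> u < 1/2 \<and> 0 < s - u \<and> s - u < 1/2} = {}" by auto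
      show ?thesis unfolding e using 3 by (auto simp: k1_def)
    qed
  qed
  finally show ?thesis .
qed

lemma k1_nn: "0 \<le> k1 s" by (simp add: k1_def)

lemma k1_prod: "s \<le> 1/2 \<Longrightarrow> k1 s * k1 (1 - s) = (if 0 \<le> s then s^2 else 0)"
  by (auto simp: k1_def power2_eq_square)

lemma J1: "(\<integral>\<^sup>+s. KK w1 s * KK w1 (1 - s) \<partial>lborel) = ennreal (1/12)"
proof -
  note [measurable] = KK_comp[OF w1_meas w1_nn]
  have "(\<integral>\<^sup>+s. KK w1 s * KK w1 (1 - s) \<partial>lborel) = 2 * (\<integral>\<^sup>+s. KK w1 s * KK w1 (1 - s) * indicator {..1/2} s \<partial>lborel)"
    by (rule sym_split) (measurable, simp add: mult.commute)
  also have "(\<integral>\<^sup>+s. KK w1 s * KK w1 (1 - s) * indicator {..1/2} s \<partial>lborel) =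
             (\<integral>\<^sup>+s. ennreal (s^2) * indicator {0..1/2} s \<partial>lborel)"
  proof (rule nn_integral_cong)
    fix s :: real
    show "KK w1 s * KK w1 (1 - s) * indicator {..1/2} s = ennreal (s^2) * indicator {0..1/2} s"
    proof (cases "s \<le> 1/2")
      case True
      have "KK w1 s * KK w1 (1 - s) = ennreal (k1 s * k1 (1 - s))"
        by (simp add: KK_w1 ennreal_mult k1_nn)
      also have "\<dots> = ennreal (if 0 \<le> s then s^2 else 0)" using k1_prod[OF True] by simp
      finally show ?thesis using True by (auto simp: indicator_def)
    next
      case False thus ?thesis by (simp add: indicator_def)
    qed
  qed
  also have "\<dots> = ennreal ((1/2)^3/3 - 0^3/3)"
    by (rule nn_FTC) (auto intro!: derivative_eq_intros continuous_intros simp: power2_eq_square)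
  also have "(1/2::real)^3/3 - 0^3/3 = 1/24" by (simp add: power3_eq_cube)
  finally show ?thesis by (simp add: ennreal_mult[symmetric] ennreal_numeral[symmetric] del: ennreal_numeral)
qed


definition Bq :: "real \<Rightarrow> real \<Rightarrow> real \<Rightarrow> real \<Rightarrow> real" where
  "Bq a b c d = sqrt (((b+c+d-a)/2) * ((a+c+d-b)/2) * ((a+b+d-c)/2) * ((a+b+c-d)/2))"

lemma mqa_good:
  assumes "0 < a" "0 < b" "0 < c" "0 < d" "a < b + c + d" "b < a + c + d" "c < a + b + d" "d < a + b + c"
  shows "max_quad_area a b c d = Bq a b c d"
proof -
  let ?S = "{quad_area z1 z2 z3 z4 | z1 z2 z3 z4. is_quadrilateral z1 z2 z3 z4 a b c d}"
  obtain z1 z2 z3 z4 where q: "is_quadrilateral z1 z2 z3 z4 a b c d" and ar: "quad_area z1 z2 z3 z4 = Bq a b c d"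
    using quad_construct[OF assms] unfolding Bq_def by blast
  have "Bq a b c d \<in> ?S" using q ar by (metis (mono_tags, lifting) mem_Collect_eq)
  moreover have "x \<le> Bq a b c d" if "x \<in> ?S" for x
  proof -
    from that obtain y1 y2 y3 y4 where x: "x = quad_area y1 y2 y3 y4" and q2: "is_quadrilateral y1 y2 y3 y4 a b c d"
      by blast
    show ?thesis unfolding x Bq_def
      by (rule area_bound) (use q2 in \<open>auto simp: is_quadrilateral_def\<close>)
  qed
  ultimately show ?thesis unfolding max_quad_area_def by (rule cSup_eq_maximum)
qed

lemma mqa_bad:
  assumes "\<not> (0 < a \<and> 0 < b \<and> 0 < c \<and> 0 < d \<and> a < b + c + d \<and> b < a + c + d \<and> c < a + b + d \<and> d < a + b + c)"
  shows "max_quad_area a b c d = Sup {}"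
proof -
  have "{quad_area z1 z2 z3 z4 | z1 z2 z3 z4. is_quadrilateral z1 z2 z3 z4 a b c d} = {}"
    using quad_necessary assms by blast
  thus ?thesis unfolding max_quad_area_def by simp
qed

abbreviation goodp :: "real \<times> real \<times> real \<Rightarrow> bool" where
  "goodp p \<equiv> good (mn p) (md p - mn p) (mx p - md p) (1 - mx p)"

lemma mapieces:
  "max_area_of_pieces p = (if goodp p then Hw w2 p else Sup ({}::real set))"
proof -
  define a where "a = mn p"
  define b where "b = md p - mn p"
  define c where "c = mx p - md p"
  define d where "d = 1 - mx p"
  have sum: "a + b + c + d = 1" by (simp add: a_def b_def c_def d_def)
  have m: "max_area_of_pieces p = max_quad_area a b c d"
    by (simp add: max_area_of_pieces_def pieces_eq a_def b_def c_def d_def)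
  have iff: "good a b c d \<longleftrightarrow> (0 < a \<and> 0 < b \<and> 0 < c \<and> 0 < d \<and> a < b + c + d \<and> b < a + c + d \<and> c < a + b + d \<and> d < a + b + c)"
    using sum unfolding good_def by auto
  show ?thesis
  proof (cases "good a b c d")
    case True
    have "max_quad_area a b c d = Bq a b c d" using True iff mqa_good by blast
    also have "\<dots> = Hw w2 p"
    proof -
      have pos: "0 < 1/2 - a" "0 < 1/2 - b" "0 < 1/2 - c" "0 < 1/2 - d" using True by (auto simp: good_def)
      have "Bq a b c d = sqrt ((1/2 - a) * (1/2 - b) * (1/2 - c) * (1/2 - d))"
      proof -
        have "(b+c+d-a)/2 = 1/2 - a" "(a+c+d-b)/2 = 1/2 - b" "(a+b+d-c)/2 = 1/2 - c" "(a+b+c-d)/2 = 1/2 - d"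
          using sum by (simp_all add: field_simps)
        note eqs = this
        show ?thesis unfolding Bq_def eqs ..
      qed
      also have "\<dots> = sqrt \<bar>(1/2 - a) * (1/2 - b)\<bar> * sqrt \<bar>(1/2 - c) * (1/2 - d)\<bar>"
        using pos by (simp add: real_sqrt_mult abs_of_pos)
      also have "\<dots> = Hw w2 p" using True
        by (simp add: Hw_def Phi_def w2_def a_def b_def c_def d_def)
      finally show ?thesis .
    qed
    finally show ?thesis using True m by (simp add: a_def b_def c_def d_def)
  next
    case False
    thus ?thesis using m iff mqa_bad by (simp add: a_def b_def c_def d_def)
  qed
qed

lemma Hw_w2_nn: "0 \<le> Hw w2 p"
  by (simp add: Hw_def Phi_def w2_def)

lemma goodp_meas[measurable]: "Measurable.pred borel goodp"
  unfolding good_def by measurable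

lemma Hw_w2_meas[measurable]: "Hw w2 \<in> borel_measurable borel"
  by (rule Hw_meas[OF w2_meas w2_nn])

lemma Hw_w1_meas[measurable]: "Hw w1 \<in> borel_measurable borel"
  by (rule Hw_meas[OF w1_meas w1_nn])

lemma map_meas[measurable]: "max_area_of_pieces \<in> borel_measurable borel"
proof -
  have "max_area_of_pieces = (\<lambda>p. if goodp p then Hw w2 p else Sup ({}::real set))"
    using mapieces by blast
  moreover have "(\<lambda>p. if goodp p then Hw w2 p else Sup ({}::real set)) \<in> borel_measurable borel"
    by measurable
  ultimately show ?thesis by simp
qed


definition C0 :: "(real \<times> real \<times> real) set" where "C0 = {0..1} \<times> {0..1} \<times> {0..1}"

lemma C0_sets[measurable]: "C0 \<in> sets borel"
  unfolding C0_def by (intro borel_closed closed_Times) auto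

lemma quad_event_eq: "quad_event = {p. mn p < 1/2 \<and> md p - mn p < 1/2 \<and> mx p - md p < 1/2 \<and> 1 - mx p < 1/2}"
  by (auto simp: quad_event_def pieces_eq)

lemma E_sets[measurable]: "quad_event \<in> sets borel"
  unfolding quad_event_eq by measurable

lemma goodp_CE: "goodp p \<Longrightarrow> p \<in> C0 \<and> p \<in> quad_event"
  by (cases p) (auto simp: C0_def quad_event_eq good_def mn_def mx_def md_def min_def max_def split: if_splits)

lemma hyper_null:
  fixes a :: "real \<times> real \<times> real"
  assumes "a \<noteq> 0"
  shows "{p. a \<bullet> p = b} \<in> null_sets lborel"
proof -
  have n: "negligible {p. a \<bullet> p = b}" using assms by (intro negligible_hyperplane) simp
  have s: "{p. a \<bullet> p = b} \<in> sets lborel" using closed_hyperplane[of a b] by simp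
  from n have "{p. a \<bullet> p = b} \<in> null_sets lebesgue" by (simp add: negligible_iff_null_sets)
  thus ?thesis using null_sets_completion_iff[OF s] by simp
qed

lemma AE_hyper: "a \<noteq> 0 \<Longrightarrow> AE p in lborel. a \<bullet> (p::real\<times>real\<times>real) \<noteq> (b::real)" for a :: "real \<times> real \<times> real"
  using AE_not_in[OF hyper_null[of a b]] by simp

lemma AE_CE_good: "AE p in lborel. p \<in> C0 \<longrightarrow> p \<in> quad_event \<longrightarrow> goodp p"
proof -
  have "AE p in lborel. (1,0,0) \<bullet> (p::real\<times>real\<times>real) \<noteq> (0::real)" "AE p in lborel. (0,1,0) \<bullet> (p::real\<times>real\<times>real) \<noteq> (0::real)"
       "AE p in lborel. (0,0,1) \<bullet> (p::real\<times>real\<times>real) \<noteq> (0::real)"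
       "AE p in lborel. (1,0,0) \<bullet> (p::real\<times>real\<times>real) \<noteq> (1::real)" "AE p in lborel. (0,1,0) \<bullet> (p::real\<times>real\<times>real) \<noteq> (1::real)"
       "AE p in lborel. (0,0,1) \<bullet> (p::real\<times>real\<times>real) \<noteq> (1::real)"
       "AE p in lborel. (1,-1,0) \<bullet> (p::real\<times>real\<times>real) \<noteq> (0::real)" "AE p in lborel. (0,1,-1) \<bullet> (p::real\<times>real\<times>real) \<noteq> (0::real)"
       "AE p in lborel. (1,0,-1) \<bullet> (p::real\<times>real\<times>real) \<noteq> (0::real)"
    using AE_hyper[of "(1,0,0)" 0] AE_hyper[of "(0,1,0)" 0] AE_hyper[of "(0,0,1)" 0]
      AE_hyper[of "(1,0,0)" 1] AE_hyper[of "(0,1,0)" 1] AE_hyper[of "(0,0,1)" 1]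
      AE_hyper[of "(1,-1,0)" 0] AE_hyper[of "(0,1,-1)" 0] AE_hyper[of "(1,0,-1)" 0]
    by (simp_all add: zero_prod_def)
  thus ?thesis
  proof eventually_elim
    case (elim p)
    obtain x y z where p: "p = (x,y,z)" by (cases p) auto
    have d: "x \<noteq> 0" "y \<noteq> 0" "z \<noteq> 0" "x \<noteq> 1" "y \<noteq> 1" "z \<noteq> 1" "x \<noteq> y" "y \<noteq> z" "x \<noteq> z"
      using elim unfolding p by simp_all
    show ?case
    proof (intro impI)
      assume "p \<in> C0" "p \<in> quad_event"
      thus "goodp p" using d unfolding p
        by (auto simp: C0_def quad_event_eq good_def mn_def mx_def md_def min_def max_def split: if_splits)
    qed
  qed
qed


lemma ennreal_div1: "(x::ennreal) / 1 = x"
  by (simp add: divide_ennreal_def)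

lemma Hw_w1_eq: "Hw w1 p = (if goodp p then 1 else 0)"
  by (simp add: Hw_def Phi_def w1_def)

lemma Hw_w2_zero: "\<not> goodp p \<Longrightarrow> Hw w2 p = 0"
  by (simp add: Hw_def Phi_def)

lemma emeasure_C0: "emeasure lborel C0 = 1"
proof -
  have "emeasure (lborel :: (real \<times> real) measure) ({0..1} \<times> {0..1}) = 1"
    by (simp add: lborel_prod[symmetric] lborel.emeasure_pair_measure_Times)
  moreover have "({0..1::real} \<times> {0..1::real}) \<in> sets (lborel :: (real \<times> real) measure)"
    by (simp, intro borel_closed closed_Times) auto
  ultimately have "emeasure (lborel \<Otimes>\<^sub>M (lborel :: (real \<times> real) measure)) ({0..1::real} \<times> ({0..1} \<times> {0..1})) = 1"
    by (subst lborel.emeasure_pair_measure_Times) simp_all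
  thus ?thesis unfolding C0_def lborel_prod .
qed

lemma vol_CE: "emeasure lborel (C0 \<inter> quad_event) = ennreal (1/2)"
proof -
  have "emeasure lborel (C0 \<inter> quad_event) = (\<integral>\<^sup>+p. indicator (C0 \<inter> quad_event) p \<partial>lborel)"
    by (rule nn_integral_indicator[symmetric]) measurable
  also have "\<dots> = (\<integral>\<^sup>+p. ennreal (Hw w1 p) \<partial>lborel)"
  proof (rule nn_integral_cong_AE)
    show "AE p in lborel. indicator (C0 \<inter> quad_event) p = ennreal (Hw w1 p)"
      using AE_CE_good
    proof eventually_elim
      case (elim p)
      thus ?case using goodp_CE[of p] by (auto simp: Hw_w1_eq indicator_def)
    qed
  qed
  also have "\<dots> = 6 * ennreal (1/12)"
    using pipeline[OF w1_meas w1_nn] J1 by simp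
  also have "\<dots> = ennreal (1/2)" by (simp add: ennreal_mult[symmetric] ennreal_numeral[symmetric] del: ennreal_numeral)
  finally show ?thesis .
qed

lemma num_CE: "(\<integral>\<^sup>+p. ennreal (Hw w2 p) \<partial>lborel) = ennreal (6 * (pi / 16 * (68/1575 - pi/120)))"
proof -
  have c0: "0 \<le> 68/1575 - pi/120" using pi_less_4 by simp
  have "(\<integral>\<^sup>+p. ennreal (Hw w2 p) \<partial>lborel) = 6 * ennreal (pi / 16 * (68/1575 - pi/120))"
    using pipeline[OF w2_meas w2_nn] J2 by simp
  thus ?thesis using c0 by (simp add: ennreal_mult[symmetric] ennreal_numeral[symmetric] del: ennreal_numeral)
qed

theorem mainTheorem3:
  shows "(\<integral>p. max_area_of_pieces p \<partial>(uniform_measure three_unif quad_event))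
           = 17 * pi / 525 - pi\<^sup>2 / 160"
proof -
  let ?U = "uniform_measure lborel C0"
  let ?M = "uniform_measure ?U quad_event"
  have tu: "three_unif = ?U" by (simp add: three_unif_def C0_def)
  have sM: "sets ?M = sets borel" by simp
  have mm: "max_area_of_pieces \<in> borel_measurable ?M"
    using measurable_cong_sets[OF sM refl] map_meas by simp
  have hm: "Hw w2 \<in> borel_measurable ?M"
    using measurable_cong_sets[OF sM refl] Hw_w2_meas by simp
  have ae: "AE p in ?M. max_area_of_pieces p = Hw w2 p"
  proof (rule AE_uniform_measureI)
    show "quad_event \<in> sets ?U" by simp
    show "AE p in ?U. p \<in> quad_event \<longrightarrow> max_area_of_pieces p = Hw w2 p"
    proof (rule AE_uniform_measureI)
      show "C0 \<in> sets lborel" by simp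
      show "AE p in lborel. p \<in> C0 \<longrightarrow> p \<in> quad_event \<longrightarrow> max_area_of_pieces p = Hw w2 p"
        using AE_CE_good by eventually_elim (simp add: mapieces)
    qed
  qed
  have "(\<integral>p. max_area_of_pieces p \<partial>?M) = (\<integral>p. Hw w2 p \<partial>?M)"
    by (rule integral_cong_AE[OF mm hm ae])
  also have "\<dots> = enn2real (\<integral>\<^sup>+p. ennreal (Hw w2 p) \<partial>?M)"
    by (rule integral_eq_nn_integral[OF hm]) (simp add: Hw_w2_nn)
  also have "(\<integral>\<^sup>+p. ennreal (Hw w2 p) \<partial>?M) = ennreal (12 * (pi / 16 * (68/1575 - pi/120)))"
  proof -
    have c0: "0 \<le> 68/1575 - pi/120" using pi_less_4 by simp
    have "(\<integral>\<^sup>+p. ennreal (Hw w2 p) \<partial>?M) = (\<integral>\<^sup>+p. ennreal (Hw w2 p) * indicator quad_event p \<partial>?U) / emeasure ?U quad_event"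
      by (rule nn_integral_uniform_measure) simp_all
    also have "(\<integral>\<^sup>+p. ennreal (Hw w2 p) * indicator quad_event p \<partial>?U) =
       (\<integral>\<^sup>+p. ennreal (Hw w2 p) * indicator quad_event p * indicator C0 p \<partial>lborel) / emeasure lborel C0"
      by (rule nn_integral_uniform_measure) simp_all
    also have "(\<integral>\<^sup>+p. ennreal (Hw w2 p) * indicator quad_event p * indicator C0 p \<partial>lborel) =
       (\<integral>\<^sup>+p. ennreal (Hw w2 p) \<partial>lborel)"
    proof (rule nn_integral_cong)
      fix p :: "real \<times> real \<times> real"
      show "ennreal (Hw w2 p) * indicator quad_event p * indicator C0 p = ennreal (Hw w2 p)"
        using goodp_CE[of p] Hw_w2_zero[of p] by (cases "goodp p") (auto simp: indicator_def)
    qed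
    also have "emeasure ?U quad_event = emeasure lborel (C0 \<inter> quad_event) / emeasure lborel C0"
      by (rule emeasure_uniform_measure) simp_all
    finally have "(\<integral>\<^sup>+p. ennreal (Hw w2 p) \<partial>?M) = ennreal (6 * (pi / 16 * (68/1575 - pi/120))) / ennreal (1/2)"
      by (simp only: emeasure_C0 vol_CE num_CE ennreal_div1)
    also have "\<dots> = ennreal (12 * (pi / 16 * (68/1575 - pi/120)))"
      using c0 by (subst divide_ennreal) simp_all
    finally show ?thesis .
  qed
  also have "enn2real (ennreal (12 * (pi / 16 * (68/1575 - pi/120)))) = 17 * pi / 525 - pi\<^sup>2 / 160"
  proof -
    have c0: "0 \<le> 68/1575 - pi/120" using pi_less_4 by simp
    hence "enn2real (ennreal (12 * (pi / 16 * (68/1575 - pi/120)))) = 12 * (pi / 16 * (68/1575 - pi/120))"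
      by simp
    also have "\<dots> = 17 * pi / 525 - pi\<^sup>2 / 160" by (simp add: field_simps power2_eq_square)
    finally show ?thesis .
  qed
  finally show ?thesis unfolding tu .
qed


end
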